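(* Let $N>0$ be an integer. Then, as formal power series in $X,Y,Z$, \[ \Phi_0^{(N)}\left(X,Y,Z;\frac{N}{N-Y}\right) =\sum_{k,q,h>0}X^{k-q-h}Y^{q-h}Z^{h-1}\sum_{({\boldsymbol{k}};l)\in \tilde{I}_0(k,q,h)}\tilde{\zeta}^{(N)}({\boldsymbol{k}};l). \]
   Context: $(x)_m=x(x+1)\cdots(x+m-1)$ is the rising factorial, $(x)_0=1$. For ${\boldsymbol{k}}=(k_1,\ldots,k_r)\in\mathbb{Z}_{>0}^r$, $\mathrm{Li}_{\boldsymbol{k}}^{(N)}(z)=\sum_{0<m_1<\cdots<m_r<N}\frac{1}{m_1^{k_1}\cdots m_r^{k_r}}\frac{(N-m_r)_{m_r}}{(Nz^{-1}-m_r)_{m_r}}$. For integers $k,r,h>0$ let $I_0(k,r,h)$ be the set of $(k_1,\ldots,k_r)\in\mathbb{Z}_{>0}^r$ with $k_r>1$, $k_1+\cdots+k_r=k$, $\#\{i\mid k_i>1\}=h$; $G_0^{(N)}(k,r,h;z)=\sum_{{\boldsymbol{k}}\in I_0(k,r,h)}\mathrm{Li}^{(N)}_{\boldsymbol{k}}(z)$ and $\Phi_0^{(N)}(X,Y,Z;z)=\sum_{k,r,h>0}G^{(N)}_0(k,r,h;z)X^{k-r-h}Y^{r-h}Z^{h-1}$; with $z=N/(N-Y)$ the factor $1/(N-Y-m)_m$ is expanded as a power series in $Y$. For $(k_1,\ldots,k_r)\in\mathbb{Z}_{>0}^r$ and integer $l\ge0$, \[ \tilde{\zeta}^{(N)}(k_1,\ldots,k_r;l)=\sum_{0<m_1<\cdots<m_r<N}\frac{1}{m_1^{k_1}\cdots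 m_r^{k_r}}\sum_{0<n_1\le\cdots\le n_l\le m_r}\frac{1}{(N-n_1)\cdots(N-n_l)} \] (the inner sum is $1$ when $l=0$), and $\tilde{I}_0(k,q,h)$ is the set of $(k_1,\ldots,k_r;l)\in\mathbb{Z}_{>0}^r\times\mathbb{Z}_{\ge0}$ with $r>0$, $k_r>1$, $k_1+\cdots+k_r+l=k$, $r+l=q$, $\#\{i\mid k_i>1\}=h$. *)

theory Defs
  imports "HOL-Analysis.Analysis" "HOL-Computational_Algebra.Formal_Power_Series"
begin

definition incr_tuples :: "nat \<Rightarrow> nat \<Rightarrow> nat list set" where
  "incr_tuples N r = {ms. length ms = r \<and> sorted_wrt (<) ms \<and> (\<forall>m\<in>set ms. 0 < m \<and> m < N)}"

definition weak_tuples :: "nat \<Rightarrow> nat \<Rightarrow> nat list set" where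
  "weak_tuples M l = {ns. length ns = l \<and> sorted ns \<and> (\<forall>n\<in>set ns. 0 < n \<and> n \<le> M)}"

definition mzv_weight :: "nat list \<Rightarrow> nat list \<Rightarrow> real" where
  "mzv_weight ks ms = (\<Prod>i<length ks. 1 / real (ms ! i) ^ (ks ! i))"

text \<open>\<open>Li^{(N)}_k(z)\<close> at \<open>z = N/(N-Y)\<close>, i.e. with \<open>N z^{-1} = N - Y\<close>, as a formal power
  series in \<open>Y\<close> (the factor \<open>1/(N-Y-m)_m\<close> is expanded as a power series in \<open>Y\<close>).\<close>
definition LiN_Y :: "nat \<Rightarrow> nat list \<Rightarrow> real fps" where
  "LiN_Y N ks = (\<Sum>ms\<in>incr_tuples N (length ks).
      fps_const (mzv_weight ks ms * pochhammer (real N - real (last ms)) (last ms))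
      * inverse (pochhammer (fps_const (real N) - fps_X - fps_const (real (last ms))) (last ms)))"

definition I0 :: "nat \<Rightarrow> nat \<Rightarrow> nat \<Rightarrow> nat list set" where
  "I0 k r h = {ks. length ks = r \<and> (\<forall>x\<in>set ks. 0 < x) \<and> 1 < last ks \<and> sum_list ks = k
                 \<and> length (filter (\<lambda>x. 1 < x) ks) = h}"

definition G0_Y :: "nat \<Rightarrow> nat \<Rightarrow> nat \<Rightarrow> nat \<Rightarrow> real fps" where
  "G0_Y N k r h = (\<Sum>ks\<in>I0 k r h. LiN_Y N ks)"

definition zeta_tilde :: "nat \<Rightarrow> nat list \<Rightarrow> nat \<Rightarrow> real" where
  "zeta_tilde N ks l = (\<Sum>ms\<in>incr_tuples N (length ks).
      mzv_weight ks ms * (\<Sum>ns\<in>weak_tuples (last ms) l. \<Prod>j<l. 1 / (real N - real (ns ! j))))"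

definition I0_tilde :: "nat \<Rightarrow> nat \<Rightarrow> nat \<Rightarrow> (nat list \<times> nat) set" where
  "I0_tilde k q h = {(ks, l). 0 < length ks \<and> (\<forall>x\<in>set ks. 0 < x) \<and> 1 < last ks
       \<and> sum_list ks + l = k \<and> length ks + l = q \<and> length (filter (\<lambda>x. 1 < x) ks) = h}"

text \<open>Trivariate formal power series in \<open>X,Y,Z\<close> are represented by their coefficient
  functions \<open>nat \<Rightarrow> nat \<Rightarrow> nat \<Rightarrow> real\<close> (\<open>c a b d\<close> = coefficient of \<open>X^a Y^b Z^d\<close>).
  \<open>gen_series F\<close> is the series \<open>\<Sum>_{k,r,h>0} F(k,r,h)(Y) X^{k-r-h} Y^{r-h} Z^{h-1}\<close>,
  where each \<open>F(k,r,h)\<close> is a power series in \<open>Y\<close>: the monomial \<open>X^a Y^b Z^d\<close> receives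
  contributions exactly from \<open>h = d+1\<close>, \<open>r = j+h\<close>, \<open>k = a+r+h\<close> with \<open>j \<le> b\<close>,
  via the coefficient of \<open>Y^{b-j}\<close> in \<open>F(k,r,h)\<close>.\<close>
definition gen_series :: "(nat \<Rightarrow> nat \<Rightarrow> nat \<Rightarrow> real fps) \<Rightarrow> nat \<Rightarrow> nat \<Rightarrow> nat \<Rightarrow> real" where
  "gen_series F a b d = (\<Sum>j\<le>b. fps_nth (F (a + (j + (d+1)) + (d+1)) (j + (d+1)) (d+1)) (b - j))"

definition Phi0_subst :: "nat \<Rightarrow> nat \<Rightarrow> nat \<Rightarrow> nat \<Rightarrow> real" where
  "Phi0_subst N = gen_series (\<lambda>k r h. G0_Y N k r h)"

definition Phi0_rhs :: "nat \<Rightarrow> nat \<Rightarrow> nat \<Rightarrow> nat \<Rightarrow> real" where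
  "Phi0_rhs N = gen_series (\<lambda>k q h. fps_const (\<Sum>(ks, l)\<in>I0_tilde k q h. zeta_tilde N ks l))"

end

theory Submission
  imports Defs
begin

fun HH :: "nat \<Rightarrow> nat \<Rightarrow> nat \<Rightarrow> real" where
  "HH N 0 l = (if l = 0 then 1 else 0)"
| "HH N (Suc m) 0 = 1"
| "HH N (Suc m) (Suc l) = HH N m (Suc l) + 1 / (real N - real (Suc m)) * HH N (Suc m) l"

lemma weak_tuples_finite: "finite (weak_tuples m l)"
proof -
  have "weak_tuples m l \<subseteq> {xs. set xs \<subseteq> {0..m} \<and> length xs = l}"
    unfolding weak_tuples_def by auto
  moreover have "finite {xs. set xs \<subseteq> {0..m} \<and> length xs = l}"
    by (rule finite_lists_length_eq) simp
  ultimately show ?thesis by (rule finite_subset)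
qed

lemma weak_tuples_0: "weak_tuples m 0 = {[]}"
  unfolding weak_tuples_def by auto

lemma weak_tuples_0_Suc: "weak_tuples 0 (Suc l) = {}"
  unfolding weak_tuples_def by (auto simp: length_Suc_conv)

lemma weak_tuples_split:
  "weak_tuples (Suc m) (Suc l) = weak_tuples m (Suc l) \<union> (\<lambda>ns. ns @ [Suc m]) ` weak_tuples (Suc m) l"
proof
  show "weak_tuples (Suc m) (Suc l) \<subseteq> weak_tuples m (Suc l) \<union> (\<lambda>ns. ns @ [Suc m]) ` weak_tuples (Suc m) l"
  proof
    fix ns assume ns: "ns \<in> weak_tuples (Suc m) (Suc l)"
    hence ne: "ns \<noteq> []" and len: "length ns = Suc l" and srt: "sorted ns"
      and el: "\<forall>n\<in>set ns. 0 < n \<and> n \<le> Suc m" unfolding weak_tuples_def by auto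
    define bs where "bs = butlast ns"
    define x where "x = last ns"
    have eq: "ns = bs @ [x]" using ne unfolding bs_def x_def by simp
    have s2: "sorted bs" "\<forall>y\<in>set bs. y \<le> x" using srt eq sorted_append[of bs "[x]"] by auto
    have e2: "\<forall>n\<in>set bs. 0 < n \<and> n \<le> Suc m" "0 < x" "x \<le> Suc m" using el eq by auto
    have lb: "length bs = l" using len eq by simp
    show "ns \<in> weak_tuples m (Suc l) \<union> (\<lambda>ns. ns @ [Suc m]) ` weak_tuples (Suc m) l"
    proof (cases "x = Suc m")
      case True
      hence "bs \<in> weak_tuples (Suc m) l" using s2 e2 lb unfolding weak_tuples_def by auto
      thus ?thesis using eq True by auto
    next
      case False
      hence "\<forall>n\<in>set ns. 0 < n \<and> n \<le> m" using s2 e2 eq by fastforce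
      thus ?thesis using len srt unfolding weak_tuples_def by auto
    qed
  qed
next
  show "weak_tuples m (Suc l) \<union> (\<lambda>ns. ns @ [Suc m]) ` weak_tuples (Suc m) l \<subseteq> weak_tuples (Suc m) (Suc l)"
    unfolding weak_tuples_def by (auto simp: sorted_append)
qed

lemma weak_sum_HH:
  "(\<Sum>ns\<in>weak_tuples m l. \<Prod>j<l. 1 / (real N - real (ns ! j))) = HH N m l"
proof (induction m arbitrary: l)
  case 0
  then show ?case by (cases l) (auto simp: weak_tuples_0 weak_tuples_0_Suc)
next
  case (Suc m)
  note outer = Suc.IH
  show ?case
  proof (induction l)
    case 0
    then show ?case by (simp add: weak_tuples_0)
  next
    case (Suc l)
    let ?f = "\<lambda>l ns. \<Prod>j<l. 1 / (real N - real (ns ! j))"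
    have disj: "weak_tuples m (Suc l) \<inter> (\<lambda>ns. ns @ [Suc m]) ` weak_tuples (Suc (m)) l = {}"
      unfolding weak_tuples_def by auto
    have inj: "inj_on (\<lambda>ns. ns @ [Suc m]) (weak_tuples (Suc m) l)"
      by (auto simp: inj_on_def)
    have "(\<Sum>ns\<in>weak_tuples (Suc m) (Suc l). ?f (Suc l) ns)
        = (\<Sum>ns\<in>weak_tuples m (Suc l). ?f (Suc l) ns)
          + (\<Sum>ns\<in>(\<lambda>ns. ns @ [Suc m]) ` weak_tuples (Suc m) l. ?f (Suc l) ns)"
      unfolding weak_tuples_split
      by (rule sum.union_disjoint) (auto simp: weak_tuples_finite disj)
    also have "(\<Sum>ns\<in>(\<lambda>ns. ns @ [Suc m]) ` weak_tuples (Suc m) l. ?f (Suc l) ns)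
        = (\<Sum>ns\<in>weak_tuples (Suc m) l. ?f (Suc l) (ns @ [Suc m]))"
      by (rule sum.reindex[OF inj, unfolded comp_def])
    also have "\<dots> = (\<Sum>ns\<in>weak_tuples (Suc m) l. 1 / (real N - real (Suc m)) * ?f l ns)"
    proof (rule sum.cong[OF refl])
      fix ns assume "ns \<in> weak_tuples (Suc m) l"
      hence len: "length ns = l" unfolding weak_tuples_def by auto
      have "?f (Suc l) (ns @ [Suc m]) = ?f l (ns @ [Suc m]) * (1 / (real N - real (Suc m)))"
        using len by (simp add: nth_append)
      also have "?f l (ns @ [Suc m]) = ?f l ns"
        using len by (intro prod.cong) (auto simp: nth_append)
      finally show "?f (Suc l) (ns @ [Suc m]) = 1 / (real N - real (Suc m)) * ?f l ns" by simp
    qed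
    also have "\<dots> = 1 / (real N - real (Suc m)) * HH N (Suc m) l"
      by (simp only: sum_distrib_left[symmetric] Suc.IH)
    finally show ?case by (simp only: outer HH.simps)
  qed
qed

lemma HH_step:
  assumes "d = real N - real (Suc m)" "d \<noteq> 0"
  shows "Abs_fps (HH N (Suc m)) * (fps_const d - fps_X) = fps_const d * Abs_fps (HH N m)"
proof -
  have "fps_const d * Abs_fps (HH N (Suc m)) - fps_X * Abs_fps (HH N (Suc m)) = fps_const d * Abs_fps (HH N m)"
  proof (rule fps_ext)
    fix n show "fps_nth (fps_const d * Abs_fps (HH N (Suc m)) - fps_X * Abs_fps (HH N (Suc m))) n = fps_nth (fps_const d * Abs_fps (HH N m)) n"
    proof (cases n)
      case 0 then show ?thesis by (cases m) auto
    next
      case (Suc l)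
      have "fps_nth (fps_const d * Abs_fps (HH N (Suc m)) - fps_X * Abs_fps (HH N (Suc m))) n
          = d * HH N (Suc m) (Suc l) - HH N (Suc m) l" using Suc by (simp del: HH.simps)
      also have "\<dots> = d * HH N m (Suc l)"
        unfolding HH.simps(3) assms(1)[symmetric] using assms(2) by (simp add: ring_distribs)
      also have "\<dots> = fps_nth (fps_const d * Abs_fps (HH N m)) n" using Suc by (simp del: HH.simps)
      finally show ?thesis .
    qed
  qed
  thus ?thesis by (simp add: algebra_simps)
qed

lemma HH_poch:
  assumes "m < N"
  shows "Abs_fps (HH N m) * pochhammer (fps_const (real N) - fps_X - fps_const (real m)) m
         = fps_const (pochhammer (real N - real m) m)"
  using assms
proof (induction m)
  case 0
  have "Abs_fps (HH N 0) = 1" by (rule fps_ext) (simp add: fps_one_nth)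
  then show ?case by (simp del: HH.simps)
next
  case (Suc m)
  define d where "d = real N - real (Suc m)"
  have d0: "d \<noteq> 0" using Suc.prems unfolding d_def by simp
  have z1: "fps_const (real N) - fps_X - fps_const (real (Suc m)) = fps_const d - fps_X"
    unfolding d_def by (rule fps_ext) simp
  have z2: "fps_const d - fps_X + 1 = fps_const (real N) - fps_X - fps_const (real m)"
    unfolding d_def by (rule fps_ext) simp
  have r: "pochhammer (real N - real (Suc m)) (Suc m) = d * pochhammer (real N - real m) m"
    unfolding d_def pochhammer_rec by (simp add: algebra_simps)
  have "Abs_fps (HH N (Suc m)) * pochhammer (fps_const (real N) - fps_X - fps_const (real (Suc m))) (Suc m)
      = (Abs_fps (HH N (Suc m)) * (fps_const d - fps_X)) * pochhammer (fps_const (real N) - fps_X - fps_const (real m)) m"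
    unfolding z1 pochhammer_rec z2 by (simp add: mult.assoc)
  also have "\<dots> = fps_const d * (Abs_fps (HH N m) * pochhammer (fps_const (real N) - fps_X - fps_const (real m)) m)"
    using HH_step[OF d_def d0] by (simp add: mult.assoc)
  also have "\<dots> = fps_const d * fps_const (pochhammer (real N - real m) m)"
    using Suc by simp
  also have "\<dots> = fps_const (pochhammer (real N - real (Suc m)) (Suc m))"
    by (simp only: r fps_const_mult)
  finally show ?case .
qed

lemma poch_inverse_HH:
  assumes "m < N"
  shows "fps_const (pochhammer (real N - real m) m) * inverse (pochhammer (fps_const (real N) - fps_X - fps_const (real m)) m)
         = Abs_fps (HH N m)"
proof -
  let ?p = "pochhammer (fps_const (real N) - fps_X - fps_const (real m)) m"
  let ?Q = "Abs_fps (HH N m)"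
  have a0: "pochhammer (real N - real m) m \<noteq> 0"
    using pochhammer_pos[of "real N - real m" m] assms by simp
  have e: "?Q * ?p = fps_const (pochhammer (real N - real m) m)" by (rule HH_poch[OF assms])
  have "fps_nth (?Q * ?p) 0 \<noteq> 0" using e a0 by simp
  hence p0: "fps_nth ?p 0 \<noteq> 0" by simp
  have "fps_const (pochhammer (real N - real m) m) * inverse ?p = ?Q * (?p * inverse ?p)"
    by (simp add: e[symmetric] mult.assoc)
  also have "\<dots> = ?Q" using inverse_mult_eq_1'[OF p0] by simp
  finally show ?thesis .
qed

lemma LiN_nth:
  assumes "ks \<noteq> []"
  shows "fps_nth (LiN_Y N ks) l = zeta_tilde N ks l"
  unfolding LiN_Y_def zeta_tilde_def fps_sum_nth
proof (rule sum.cong[OF refl])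
  fix ms assume ms: "ms \<in> incr_tuples N (length ks)"
  hence "ms \<noteq> []" "\<forall>m\<in>set ms. 0 < m \<and> m < N" using assms unfolding incr_tuples_def by auto
  hence lt: "last ms < N" by auto
  have "fps_const (mzv_weight ks ms * pochhammer (real N - real (last ms)) (last ms))
      * inverse (pochhammer (fps_const (real N) - fps_X - fps_const (real (last ms))) (last ms))
      = fps_const (mzv_weight ks ms) * (fps_const (pochhammer (real N - real (last ms)) (last ms))
      * inverse (pochhammer (fps_const (real N) - fps_X - fps_const (real (last ms))) (last ms)))"
    by (simp only: fps_const_mult[symmetric] mult.assoc)
  also have "\<dots> = fps_const (mzv_weight ks ms) * Abs_fps (HH N (last ms))"
    by (simp only: poch_inverse_HH[OF lt])
  finally show "fps_nth (fps_const (mzv_weight ks ms * pochhammer (real N - real (last ms)) (last ms))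
      * inverse (pochhammer (fps_const (real N) - fps_X - fps_const (real (last ms))) (last ms))) l
      = mzv_weight ks ms * (\<Sum>ns\<in>weak_tuples (last ms) l. \<Prod>j<l. 1 / (real N - real (ns ! j)))"
    by (simp add: weak_sum_HH del: HH.simps)
qed

lemma I0_finite: "finite (I0 k r h)"
proof -
  have "I0 k r h \<subseteq> {xs. set xs \<subseteq> {0..k} \<and> length xs = r}"
    unfolding I0_def by (auto dest: member_le_sum_list)
  moreover have "finite {xs. set xs \<subseteq> {0..k} \<and> length xs = r}"
    by (rule finite_lists_length_eq) simp
  ultimately show ?thesis by (rule finite_subset)
qed

lemma I0_tilde_image:
  "(\<lambda>(j, ks). (ks, b - j)) ` (SIGMA j:{..b}. I0 (a + (j + (d + 1)) + (d + 1)) (j + (d + 1)) ((d + 1)))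
   = I0_tilde (a + (b + (d + 1)) + (d + 1)) (b + (d + 1)) ((d + 1))"
proof
  show "(\<lambda>(j, ks). (ks, b - j)) ` (SIGMA j:{..b}. I0 (a + (j + (d + 1)) + (d + 1)) (j + (d + 1)) ((d + 1)))
   \<subseteq> I0_tilde (a + (b + (d + 1)) + (d + 1)) (b + (d + 1)) ((d + 1))"
    unfolding I0_def I0_tilde_def by auto
next
  show "I0_tilde (a + (b + (d + 1)) + (d + 1)) (b + (d + 1)) ((d + 1)) \<subseteq>
    (\<lambda>(j, ks). (ks, b - j)) ` (SIGMA j:{..b}. I0 (a + (j + (d + 1)) + (d + 1)) (j + (d + 1)) ((d + 1)))"
  proof
    fix p assume "p \<in> I0_tilde (a + (b + (d + 1)) + (d + 1)) (b + (d + 1)) ((d + 1))"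
    then obtain ks l where p: "p = (ks, l)" and h: "0 < length ks" "\<forall>x\<in>set ks. 0 < x" "1 < last ks"
      "sum_list ks + l = a + (b + (d + 1)) + (d + 1)" "length ks + l = b + (d + 1)"
      "length (filter (\<lambda>x. 1 < x) ks) = (d + 1)"
      unfolding I0_tilde_def by auto
    have ge: "(d + 1) \<le> length ks" using length_filter_le[of "\<lambda>x. 1 < x" ks] h(6) by linarith
    define j where "j = length ks - (d + 1)"
    have j: "j \<le> b" "l = b - j" "length ks = j + (d + 1)" using ge h unfolding j_def by auto
    have "ks \<in> I0 (a + (j + (d + 1)) + (d + 1)) (j + (d + 1)) ((d + 1))"
      using h j unfolding I0_def by auto
    thus "p \<in> (\<lambda>(j, ks). (ks, b - j)) ` (SIGMA j:{..b}. I0 (a + (j + (d + 1)) + (d + 1)) (j + (d + 1)) ((d + 1)))"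
      using p j by (auto intro!: image_eqI[of _ _ "(j, ks)"])
  qed
qed

theorem proposition5p4:
  fixes N :: nat
  assumes "0 < N"
  shows "Phi0_subst N = Phi0_rhs N"
proof (intro ext)
  fix a b d
  let ?A = "\<lambda>j. I0 (a + (j + (d + 1)) + (d + 1)) (j + (d + 1)) ((d + 1))"
  let ?S = "\<lambda>k q h. \<Sum>(ks, l)\<in>I0_tilde k q h. zeta_tilde N ks l"
  have "Phi0_subst N a b d = (\<Sum>j\<le>b. \<Sum>ks\<in>?A j. zeta_tilde N ks (b - j))"
    unfolding Phi0_subst_def gen_series_def G0_Y_def fps_sum_nth
  proof (intro sum.cong refl)
    fix j ks assume "ks \<in> I0 (a + (j + (d + 1)) + (d + 1)) (j + (d + 1)) (d + 1)"
    hence "ks \<noteq> []" unfolding I0_def by auto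
    thus "fps_nth (LiN_Y N ks) (b - j) = zeta_tilde N ks (b - j)" by (rule LiN_nth)
  qed
  also have "\<dots> = (\<Sum>(j, ks)\<in>(SIGMA j:{..b}. ?A j). zeta_tilde N ks (b - j))"
    by (rule sum.Sigma) (auto simp: I0_finite)
  also have "\<dots> = (\<Sum>p\<in>(\<lambda>(j, ks). (ks, b - j)) ` (SIGMA j:{..b}. ?A j). case p of (ks, l) \<Rightarrow> zeta_tilde N ks l)"
  proof (subst sum.reindex)
    show "inj_on (\<lambda>(j, ks). (ks, b - j)) (SIGMA j:{..b}. ?A j)"
      unfolding inj_on_def I0_def by auto
  qed (simp add: case_prod_beta)
  also have "\<dots> = ?S (a + (b + (d + 1)) + (d + 1)) (b + (d + 1)) ((d + 1))"
    by (simp only: I0_tilde_image)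
  also have "\<dots> = Phi0_rhs N a b d"
  proof -
    have "Phi0_rhs N a b d = (\<Sum>j\<le>b. if j = b then ?S (a + (j + (d + 1)) + (d + 1)) (j + (d + 1)) ((d + 1)) else 0)"
      unfolding Phi0_rhs_def gen_series_def
      by (intro sum.cong refl) auto
    also have "\<dots> = ?S (a + (b + (d + 1)) + (d + 1)) (b + (d + 1)) ((d + 1))"
      by (simp add: sum.delta)
    finally show ?thesis by simp
  qed
  finally show "Phi0_subst N a b d = Phi0_rhs N a b d" .
qed

end
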